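(* Let $\beta>0$ and let $m,n\to\infty$ with $m n^{-1}\to\beta$. Let $\mathrm{P}^{\star}$ (depending on $m,n$) be a probability distribution on $\{0,1,\dots,n\}$ and let $X$ be a random variable with distribution $\mathrm{P}^{\star}$. Assume that (i) $X$ converges in distribution to a random variable $Z$; (ii) $\mathbf{E} Z^2<\infty$ and $\lim_{m,n\to\infty}\mathbf{E} X^2=\mathbf{E} Z^2$; (iii) $\mathbf{E} Z^3=\infty$. Then the global clustering coefficient of the passive random intersection graph $G^{\star}=G^{\star}(n,m,\mathrm{P}^{\star})$ satisfies $C_{G^{\star}}=1-o_P(1)$.
   Context: Passive random intersection graph $G^{\star}(n,m,\mathrm{P}^{\star})$: vertex set $V=\{v_1,\dots,v_n\}$, auxiliary attribute set $W=\{w_1,\dots,w_m\}$. Each attribute $w\in W$ independently selects a random subset $D_w\subset V$ with $\mathbf{P}(D_w=A)=\mathrm{P}^{\star}(|A|)\binom{n}{|A|}^{-1}$ for $A\subset V$. Two distinct vertices $u,v$ are adjacent iff $u,v\in D_w$ for some $w\in W$. For a graph $G$, the global clustering coefficient is $C_G=3\Delta/\Lambda$, where $\Delta$ is the number of triangles and $\Lambda$ the number of paths of length $2$ in $G$. $o_P(1)$ denotes a quantity converging to $0$ in probability. *)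

theory Defs
  imports "HOL-Probability.Probability"
begin

definition attr_set_pmf :: "nat \<Rightarrow> nat pmf \<Rightarrow> nat set pmf" where
  "attr_set_pmf n Pstar =
     bind_pmf Pstar (\<lambda>s. pmf_of_set {A. A \<subseteq> {..<n} \<and> card A = s})"

definition passive_rig :: "nat \<Rightarrow> nat \<Rightarrow> nat pmf \<Rightarrow> (nat \<Rightarrow> nat set) pmf" where
  "passive_rig n m Pstar = Pi_pmf {..<m} {} (\<lambda>_. attr_set_pmf n Pstar)"

definition rig_adj :: "nat \<Rightarrow> (nat \<Rightarrow> nat set) \<Rightarrow> nat \<Rightarrow> nat \<Rightarrow> bool" where
  "rig_adj m D u v \<longleftrightarrow> u \<noteq> v \<and> (\<exists>w<m. u \<in> D w \<and> v \<in> D w)"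

definition num_triangles :: "nat \<Rightarrow> (nat \<Rightarrow> nat \<Rightarrow> bool) \<Rightarrow> nat" where
  "num_triangles n E =
     card {T. T \<subseteq> {..<n} \<and> card T = 3 \<and> (\<forall>u\<in>T. \<forall>v\<in>T. u \<noteq> v \<longrightarrow> E u v)}"

definition num_2paths :: "nat \<Rightarrow> (nat \<Rightarrow> nat \<Rightarrow> bool) \<Rightarrow> nat" where
  "num_2paths n E =
     card {(v, P). v < n \<and> P \<subseteq> {..<n} \<and> card P = 2 \<and> v \<notin> P \<and> (\<forall>u\<in>P. E v u)}"

text \<open>Global clustering coefficient 3*Delta/Lambda (equal to 0 if Lambda = 0, by the
convention x / 0 = 0).\<close>
definition global_clustering :: "nat \<Rightarrow> (nat \<Rightarrow> nat \<Rightarrow> bool) \<Rightarrow> real" where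
  "global_clustering n E = 3 * real (num_triangles n E) / real (num_2paths n E)"

end

theory Submission
  imports Defs
begin


lemma card_closed:
  fixes E :: "nat \<Rightarrow> nat \<Rightarrow> bool"
  assumes sym: "\<And>u v. E u v \<Longrightarrow> E v u"
  shows "card {(v,P). v<N \<and> P \<subseteq> {..<N} \<and> card P = 2 \<and> v \<notin> P \<and> (\<forall>u\<in>P. E v u)
            \<and> (\<forall>a\<in>P. \<forall>b\<in>P. a\<noteq>b \<longrightarrow> E a b)} = 3 * num_triangles N E"
proof -
  define Tri where "Tri = {T. T \<subseteq> {..<N} \<and> card T = 3 \<and> (\<forall>u\<in>T. \<forall>v\<in>T. u \<noteq> v \<longrightarrow> E u v)}"
  define Cl where "Cl = {(v,P). v<N \<and> P \<subseteq> {..<N} \<and> card P = 2 \<and> v \<notin> P \<and> (\<forall>u\<in>P. E v u)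
            \<and> (\<forall>a\<in>P. \<forall>b\<in>P. a\<noteq>b \<longrightarrow> E a b)}"
  have finTri: "finite Tri" unfolding Tri_def
    by (rule finite_subset[of _ "Pow {..<N}"]) auto
  have "bij_betw (\<lambda>(v,P). (insert v P, v)) Cl (Sigma Tri (\<lambda>T. T))"
  proof (rule bij_betw_byWitness[where f'="\<lambda>(T,v). (v, T - {v})"])
    show "\<forall>a\<in>Cl. (case case a of (v, P) \<Rightarrow> (insert v P, v) of (T, v) \<Rightarrow> (v, T - {v})) = a"
      unfolding Cl_def by auto
    show "\<forall>a'\<in>Sigma Tri (\<lambda>T. T). (case case a' of (T, v) \<Rightarrow> (v, T - {v}) of (v, P) \<Rightarrow> (insert v P, v)) = a'"
      by auto
    have "(insert v P, v) \<in> Sigma Tri (\<lambda>T. T)" if "(v,P) \<in> Cl" for v P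
    proof -
      from that have h: "v<N" "P \<subseteq> {..<N}" "card P = 2" "v \<notin> P" "\<forall>u\<in>P. E v u"
        "\<forall>a\<in>P. \<forall>b\<in>P. a\<noteq>b \<longrightarrow> E a b" unfolding Cl_def by auto
      have "finite P" using h(3) by (rule_tac ccontr) simp
      then have "card (insert v P) = 3" using h by simp
      moreover have "\<forall>a\<in>insert v P. \<forall>b\<in>insert v P. a\<noteq>b \<longrightarrow> E a b"
        using h sym by blast
      ultimately show "(insert v P, v) \<in> Sigma Tri (\<lambda>T. T)"
        unfolding Tri_def using h by auto
    qed
    then show "(\<lambda>(v, P). (insert v P, v)) ` Cl \<subseteq> Sigma Tri (\<lambda>T. T)" by auto
    have "(v, T - {v}) \<in> Cl" if "T \<in> Tri" "v \<in> T" for T v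
    proof -
      from that have h: "T \<subseteq> {..<N}" "card T = 3" "\<forall>u\<in>T. \<forall>w\<in>T. u \<noteq> w \<longrightarrow> E u w"
        unfolding Tri_def by auto
      have "finite T" using h(2) by (rule_tac ccontr) simp
      then have "card (T - {v}) = 2" using h that(2) by simp
      then show "(v, T - {v}) \<in> Cl" unfolding Cl_def using h that(2) by auto
    qed
    then show "(\<lambda>(T, v). (v, T - {v})) ` Sigma Tri (\<lambda>T. T) \<subseteq> Cl" by auto
  qed
  then have "card Cl = card (Sigma Tri (\<lambda>T. T))" by (rule bij_betw_same_card)
  also have "\<dots> = (\<Sum>T\<in>Tri. card T)"
    by (rule card_SigmaI) (use finTri in \<open>auto simp: Tri_def intro: card_ge_0_finite\<close>)
  also have "\<dots> = (\<Sum>T\<in>Tri. 3)" by (rule sum.cong) (auto simp: Tri_def)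
  also have "\<dots> = 3 * card Tri" by simp
  finally show ?thesis unfolding Cl_def Tri_def num_triangles_def .
qed

lemma sum_card_le_union:
  fixes F :: "'i \<Rightarrow> 'a set"
  assumes "finite I" "\<forall>i\<in>I. finite (F i)"
  shows "(\<Sum>i\<in>I. card (F i)) \<le> card (\<Union>i\<in>I. F i) + (\<Sum>i\<in>I. \<Sum>j\<in>I-{i}. card (F i \<inter> F j))"
  using assms
proof (induction I rule: finite_induct)
  case empty
  then show ?case by simp
next
  case (insert x I)
  let ?U = "\<Union>i\<in>I. F i"
  have finU: "finite ?U" using insert.prems insert.hyps(1) by auto
  have IH: "(\<Sum>i\<in>I. card (F i)) \<le> card ?U + (\<Sum>i\<in>I. \<Sum>j\<in>I-{i}. card (F i \<inter> F j))"
    using insert.IH insert.prems by auto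
  have cu: "card (F x) + card ?U = card (F x \<union> ?U) + card (F x \<inter> ?U)"
    by (rule card_Un_Int) (use insert.prems finU in auto)
  have "card (F x \<inter> ?U) = card (\<Union>i\<in>I. F x \<inter> F i)" by (simp only: Int_UN_distrib)
  also have "\<dots> \<le> (\<Sum>i\<in>I. card (F x \<inter> F i))" by (rule card_UN_le) (use insert in auto)
  finally have ci: "card (F x \<inter> ?U) \<le> (\<Sum>i\<in>I. card (F x \<inter> F i))" .
  have ds: "(\<Sum>i\<in>insert x I. \<Sum>j\<in>insert x I-{i}. card (F i \<inter> F j))
      = (\<Sum>j\<in>I. card (F x \<inter> F j)) + (\<Sum>i\<in>I. card (F i \<inter> F x) + (\<Sum>j\<in>I-{i}. card (F i \<inter> F j)))"
  proof -
    have "(\<Sum>i\<in>insert x I. \<Sum>j\<in>insert x I-{i}. card (F i \<inter> F j))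
        = (\<Sum>j\<in>insert x I-{x}. card (F x \<inter> F j)) + (\<Sum>i\<in>I. \<Sum>j\<in>insert x I-{i}. card (F i \<inter> F j))"
      by (rule sum.insert[OF insert.hyps])
    also have "insert x I - {x} = I" using insert by auto
    also have "(\<Sum>i\<in>I. \<Sum>j\<in>insert x I-{i}. card (F i \<inter> F j)) =
        (\<Sum>i\<in>I. card (F i \<inter> F x) + (\<Sum>j\<in>I-{i}. card (F i \<inter> F j)))"
    proof (rule sum.cong)
      fix i assume "i \<in> I"
      then have e: "insert x I - {i} = insert x (I - {i})" and n: "x \<notin> I - {i}" using insert.hyps by auto
      show "(\<Sum>j\<in>insert x I-{i}. card (F i \<inter> F j)) = card (F i \<inter> F x) + (\<Sum>j\<in>I-{i}. card (F i \<inter> F j))"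
        unfolding e by (rule sum.insert[OF _ n]) (use insert.hyps in simp)
    qed simp
    finally show ?thesis .
  qed
  have "(\<Sum>i\<in>insert x I. card (F i)) = card (F x) + (\<Sum>i\<in>I. card (F i))" by (rule sum.insert[OF insert.hyps])
  also have "\<dots> \<le> card (F x) + card ?U + (\<Sum>i\<in>I. \<Sum>j\<in>I-{i}. card (F i \<inter> F j))" using IH by linarith
  also have "\<dots> \<le> card (F x \<union> ?U) + (\<Sum>i\<in>I. card (F x \<inter> F i)) + (\<Sum>i\<in>I. \<Sum>j\<in>I-{i}. card (F i \<inter> F j))"
    using cu ci by linarith
  also have "\<dots> \<le> card (\<Union>i\<in>insert x I. F i) + (\<Sum>i\<in>insert x I. \<Sum>j\<in>insert x I-{i}. card (F i \<inter> F j))"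
  proof -
    have "(\<Sum>i\<in>I. card (F i \<inter> F x) + (\<Sum>j\<in>I-{i}. card (F i \<inter> F j))) =
       (\<Sum>i\<in>I. card (F i \<inter> F x)) + (\<Sum>i\<in>I. \<Sum>j\<in>I-{i}. card (F i \<inter> F j))" by (rule sum.distrib)
    moreover have u: "(\<Union>i\<in>insert x I. F i) = F x \<union> ?U" by simp
    ultimately show ?thesis unfolding ds u by linarith
  qed
  finally show ?case .
qed



definition Ffam :: "nat set \<Rightarrow> (nat \<times> nat set) set" where
  "Ffam A = {(v,P). v \<in> A \<and> P \<subseteq> A \<and> card P = 2 \<and> v \<notin> P}"

definition hn :: "nat \<Rightarrow> nat" where "hn x = x * ((x - 1) choose 2)"

lemma card_Ffam: assumes "finite A" shows "card (Ffam A) = hn (card A)"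
proof -
  have "Ffam A = Sigma A (\<lambda>v. {P. P \<subseteq> A - {v} \<and> card P = 2})" unfolding Ffam_def by auto
  then have "card (Ffam A) = (\<Sum>v\<in>A. card {P. P \<subseteq> A - {v} \<and> card P = 2})"
    using assms by (simp add: card_SigmaI)
  also have "\<dots> = (\<Sum>v\<in>A. (card A - 1) choose 2)"
    by (rule sum.cong) (use assms in \<open>auto simp: n_subsets\<close>)
  finally show ?thesis by (simp add: hn_def)
qed

lemma card_Ffam_Int: assumes "finite A" "finite B"
  shows "card (Ffam A \<inter> Ffam B) \<le> card (A \<inter> B) * card A * card B"
proof -
  let ?C = "A \<inter> B"
  have fC: "finite ?C" using assms by auto
  have "Ffam A \<inter> Ffam B \<subseteq> Sigma ?C (\<lambda>_. {P. P \<subseteq> ?C \<and> card P = 2})" unfolding Ffam_def by auto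
  then have "card (Ffam A \<inter> Ffam B) \<le> card (Sigma ?C (\<lambda>_. {P. P \<subseteq> ?C \<and> card P = 2}))"
    by (rule card_mono[rotated]) (use fC in \<open>auto intro: finite_subset[of _ "?C \<times> Pow ?C"]\<close>)
  also have "\<dots> = card ?C * (card ?C choose 2)"
    using fC n_subsets[OF fC, of 2] by (simp only: card_cartesian_product)
  also have "card ?C choose 2 \<le> card A * card B"
  proof -
    have "card ?C choose 2 \<le> card ?C * card ?C"
    proof -
      have "card ?C choose 2 \<le> card ?C * (card ?C - 1)" by (simp add: choose_two)
      also have "\<dots> \<le> card ?C * card ?C" by simp
      finally show ?thesis .
    qed
    also have "\<dots> \<le> card A * card B" using assms by (intro mult_mono card_mono) auto
    finally show ?thesis .
  qed
  then have "card ?C * (card ?C choose 2) \<le> card ?C * (card A * card B)" by simp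
  finally show ?thesis by (simp add: mult.assoc)
qed

definition Sfun :: "nat \<Rightarrow> (nat \<Rightarrow> nat set) \<Rightarrow> nat" where
  "Sfun M D = (\<Sum>w<M. hn (card (D w)))"
definition Rfun :: "nat \<Rightarrow> (nat \<Rightarrow> nat set) \<Rightarrow> nat" where
  "Rfun M D = (\<Sum>w<M. \<Sum>w'\<in>{..<M}-{w}. card (D w \<inter> D w') * card (D w) * card (D w'))"

lemma rig_adj_sym: "rig_adj M D u v \<Longrightarrow> rig_adj M D v u"
  unfolding rig_adj_def by blast



lemma finite_Ffam: "finite A \<Longrightarrow> finite (Ffam A)"
  unfolding Ffam_def by (rule finite_subset[of _ "A \<times> Pow A"]) auto

lemma det_bounds:
  assumes sub: "\<forall>w<M. D w \<subseteq> {..<N}"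
  shows "3 * num_triangles N (rig_adj M D) \<le> num_2paths N (rig_adj M D)"
    "Sfun M D \<le> 3 * num_triangles N (rig_adj M D) + Rfun M D"
    "num_2paths N (rig_adj M D) \<le> 3 * num_triangles N (rig_adj M D) + Rfun M D"
proof -
  let ?G = "rig_adj M D"
  define Paths where "Paths = {(v,P). v<N \<and> P \<subseteq> {..<N} \<and> card P = 2 \<and> v \<notin> P \<and> (\<forall>u\<in>P. ?G v u)}"
  define Cl where "Cl = {(v,P). v<N \<and> P \<subseteq> {..<N} \<and> card P = 2 \<and> v \<notin> P \<and> (\<forall>u\<in>P. ?G v u)
            \<and> (\<forall>a\<in>P. \<forall>b\<in>P. a\<noteq>b \<longrightarrow> ?G a b)}"
  have finP: "finite Paths" unfolding Paths_def
    by (rule finite_subset[of _ "{..<N} \<times> Pow {..<N}"]) auto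
  have cl3: "card Cl = 3 * num_triangles N ?G" unfolding Cl_def
    by (rule card_closed) (rule rig_adj_sym)
  have "Cl \<subseteq> Paths" unfolding Cl_def Paths_def by auto
  then have "card Cl \<le> card Paths" using finP by (rule card_mono[rotated])
  then show "3 * num_triangles N ?G \<le> num_2paths N ?G" using cl3 unfolding num_2paths_def Paths_def by simp
  define U where "U = (\<Union>w<M. Ffam (D w))"
  have finD: "finite (D w)" if "w<M" for w using sub that finite_subset by blast
  have UCl: "U \<subseteq> Cl"
  proof
    fix x assume "x \<in> U"
    then obtain w v P where w: "w<M" "x = (v,P)" "v \<in> D w" "P \<subseteq> D w" "card P = 2" "v \<notin> P"
      unfolding U_def Ffam_def by auto
    have "\<forall>u\<in>P. ?G v u" using w unfolding rig_adj_def by auto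
    moreover have "\<forall>a\<in>P. \<forall>b\<in>P. a\<noteq>b \<longrightarrow> ?G a b" using w unfolding rig_adj_def by auto
    moreover have "P \<subseteq> {..<N}" "v < N" using w sub by auto
    ultimately show "x \<in> Cl" using w unfolding Cl_def by auto
  qed
  have finCl: "finite Cl" using \<open>Cl \<subseteq> Paths\<close> finP finite_subset by blast
  have cardU: "card U \<le> 3 * num_triangles N ?G" using card_mono[OF finCl UCl] cl3 by simp
  have "Sfun M D = (\<Sum>w<M. card (Ffam (D w)))"
    unfolding Sfun_def by (rule sum.cong) (auto simp: card_Ffam finD)
  also have "\<dots> \<le> card U + (\<Sum>w<M. \<Sum>w'\<in>{..<M}-{w}. card (Ffam (D w) \<inter> Ffam (D w')))"
    unfolding U_def by (rule sum_card_le_union) (auto intro: finite_Ffam finD)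
  also have "(\<Sum>w<M. \<Sum>w'\<in>{..<M}-{w}. card (Ffam (D w) \<inter> Ffam (D w'))) \<le> Rfun M D"
    unfolding Rfun_def by (intro sum_mono card_Ffam_Int) (auto simp: finD)
  finally show "Sfun M D \<le> 3 * num_triangles N ?G + Rfun M D" using cardU by simp
  define Tup where "Tup = (\<Union>w1<M. \<Union>w2\<in>{..<M}-{w1}.
      (\<lambda>(v,u1,u2). (v, {u1,u2})) ` ((D w1 \<inter> D w2) \<times> D w1 \<times> D w2))"
  have cTup: "card Tup \<le> Rfun M D"
  proof -
    have "card Tup \<le> (\<Sum>w1<M. card (\<Union>w2\<in>{..<M}-{w1}.
      (\<lambda>(v,u1,u2). (v, {u1,u2})) ` ((D w1 \<inter> D w2) \<times> D w1 \<times> D w2)))"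
      unfolding Tup_def by (rule card_UN_le) simp
    also have "\<dots> \<le> (\<Sum>w1<M. \<Sum>w2\<in>{..<M}-{w1}. card
      ((\<lambda>(v,u1,u2). (v, {u1,u2})) ` ((D w1 \<inter> D w2) \<times> D w1 \<times> D w2)))"
      by (intro sum_mono card_UN_le) simp
    also have "\<dots> \<le> (\<Sum>w1<M. \<Sum>w2\<in>{..<M}-{w1}. card ((D w1 \<inter> D w2) \<times> D w1 \<times> D w2))"
      by (intro sum_mono card_image_le) (auto simp: finD)
    also have "\<dots> = Rfun M D" unfolding Rfun_def by (simp add: card_cartesian_product mult.assoc)
    finally show ?thesis .
  qed
  have "Paths \<subseteq> U \<union> Tup"
  proof
    fix x assume "x \<in> Paths"
    then obtain v P where x: "x = (v,P)" "v<N" "P \<subseteq> {..<N}" "card P = 2" "v \<notin> P" "\<forall>u\<in>P. ?G v u"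
      unfolding Paths_def by auto
    obtain u1 u2 where P: "P = {u1,u2}" "u1 \<noteq> u2" using x(4) by (auto simp: card_2_iff)
    obtain w1 where w1: "w1<M" "v \<in> D w1" "u1 \<in> D w1" using x(6) P unfolding rig_adj_def by auto
    obtain w2 where w2: "w2<M" "v \<in> D w2" "u2 \<in> D w2" using x(6) P unfolding rig_adj_def by auto
    show "x \<in> U \<union> Tup"
    proof (cases "w1 = w2")
      case True
      then have "x \<in> Ffam (D w1)" using w1 w2 x P unfolding Ffam_def by auto
      then show ?thesis using w1 unfolding U_def by auto
    next
      case False
      then have "x \<in> (\<lambda>(v,u1,u2). (v, {u1,u2})) ` ((D w1 \<inter> D w2) \<times> D w1 \<times> D w2)"
        using w1 w2 x P by (intro image_eqI[where x="(v,u1,u2)"]) auto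
      then show ?thesis using w1 w2 False unfolding Tup_def by blast
    qed
  qed
  moreover have "finite U" unfolding U_def by (auto intro: finite_Ffam finD)
  moreover have "finite Tup" unfolding Tup_def by (auto intro: finD)
  ultimately have "card Paths \<le> card (U \<union> Tup)"
    by (intro card_mono) auto
  also have "\<dots> \<le> card U + card Tup" by (rule card_Un_le)
  finally show "num_2paths N ?G \<le> 3 * num_triangles N ?G + Rfun M D"
    using cardU cTup unfolding num_2paths_def Paths_def by simp
qed



definition Sub :: "nat \<Rightarrow> nat \<Rightarrow> nat set set" where
  "Sub N s = {A. A \<subseteq> {..<N} \<and> card A = s}"

lemma Sub_finite: "finite (Sub N s)"
  unfolding Sub_def by (rule finite_subset[of _ "Pow {..<N}"]) auto

lemma Sub_card: "card (Sub N s) = N choose s"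
  unfolding Sub_def using n_subsets[of "{..<N}" s] by simp

lemma Sub_ne: "s \<le> N \<Longrightarrow> Sub N s \<noteq> {}"
  using Sub_card[of N s] by (metis card.empty zero_less_binomial_iff less_not_refl2)

lemma attr_def': "attr_set_pmf N P = bind_pmf P (\<lambda>s. pmf_of_set (Sub N s))"
  unfolding attr_set_pmf_def Sub_def ..

lemma set_attr:
  assumes "set_pmf P \<subseteq> {..N}" "D \<in> set_pmf (attr_set_pmf N P)"
  shows "D \<subseteq> {..<N}" "card D \<in> set_pmf P"
proof -
  from assms(2) obtain s where s: "s \<in> set_pmf P" "D \<in> set_pmf (pmf_of_set (Sub N s))"
    unfolding attr_def' by auto
  have "s \<le> N" using s assms(1) by auto
  then have "D \<in> Sub N s" using s Sub_ne Sub_finite by auto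
  then show "D \<subseteq> {..<N}" "card D \<in> set_pmf P" using s unfolding Sub_def by auto
qed

lemma finite_set_attr:
  assumes "set_pmf P \<subseteq> {..N}"
  shows "finite (set_pmf (attr_set_pmf N P))"
  by (rule finite_subset[of _ "Pow {..<N}"]) (use set_attr[OF assms] in auto)

lemma exp_attr:
  fixes h :: "nat set \<Rightarrow> real"
  assumes "set_pmf P \<subseteq> {..N}"
  shows "measure_pmf.expectation (attr_set_pmf N P) h =
     (\<Sum>s\<le>N. pmf P s * measure_pmf.expectation (pmf_of_set (Sub N s)) h)"
  unfolding attr_def'
  by (subst pmf_expectation_bind[of "{..N}"]) (use assms Sub_ne Sub_finite in auto)

lemma exp_P:
  fixes g :: "nat \<Rightarrow> real"
  assumes "set_pmf P \<subseteq> {..N}"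
  shows "measure_pmf.expectation P g = (\<Sum>s\<le>N. pmf P s * g s)"
  by (subst integral_measure_pmf[of "{..N}"]) (use assms in auto)

lemma exp_attr_card:
  fixes g :: "nat \<Rightarrow> real"
  assumes "set_pmf P \<subseteq> {..N}"
  shows "measure_pmf.expectation (attr_set_pmf N P) (\<lambda>D. g (card D)) = measure_pmf.expectation P g"
proof -
  have "measure_pmf.expectation (pmf_of_set (Sub N s)) (\<lambda>D. g (card D)) = g s" if "s \<le> N" for s
  proof -
    have "measure_pmf.expectation (pmf_of_set (Sub N s)) (\<lambda>D. g (card D)) =
        (\<Sum>D\<in>Sub N s. g (card D)) / card (Sub N s)"
      by (rule integral_pmf_of_set) (use Sub_ne[OF that] Sub_finite in auto)
    also have "(\<Sum>D\<in>Sub N s. g (card D)) = (\<Sum>D\<in>Sub N s. g s)"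
      by (rule sum.cong) (auto simp: Sub_def)
    also have "card (Sub N s) > 0" using Sub_ne[OF that] Sub_finite by (simp add: card_gt_0_iff)
    ultimately show ?thesis by simp
  qed
  then show ?thesis using assms by (simp add: exp_attr exp_P)
qed

lemma card_Sub_mem:
  assumes "v < N" "s \<ge> 1"
  shows "card {D\<in>Sub N s. v \<in> D} = (N - 1) choose (s - 1)"
proof -
  have "bij_betw (insert v) {E. E \<subseteq> {..<N} - {v} \<and> card E = s - 1} {D\<in>Sub N s. v \<in> D}"
  proof (rule bij_betw_byWitness[where f'="\<lambda>D. D - {v}"])
    show "\<forall>a\<in>{E. E \<subseteq> {..<N} - {v} \<and> card E = s - 1}. insert v a - {v} = a" by auto
    show "\<forall>a'\<in>{D \<in> Sub N s. v \<in> D}. insert v (a' - {v}) = a'" by auto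
    show "insert v ` {E. E \<subseteq> {..<N} - {v} \<and> card E = s - 1} \<subseteq> {D \<in> Sub N s. v \<in> D}"
    proof
      fix x assume "x \<in> insert v ` {E. E \<subseteq> {..<N} - {v} \<and> card E = s - 1}"
      then obtain E where E: "x = insert v E" "E \<subseteq> {..<N} - {v}" "card E = s - 1" by auto
      have "finite E" using E(2) finite_subset by blast
      moreover have "v \<notin> E" using E(2) by auto
      ultimately have "card x = s" using E assms by simp
      then show "x \<in> {D \<in> Sub N s. v \<in> D}" using E assms unfolding Sub_def by auto
    qed
    show "(\<lambda>D. D - {v}) ` {D \<in> Sub N s. v \<in> D} \<subseteq> {E. E \<subseteq> {..<N} - {v} \<and> card E = s - 1}"
    proof
      fix x assume "x \<in> (\<lambda>D. D - {v}) ` {D \<in> Sub N s. v \<in> D}"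
      then obtain D where D: "x = D - {v}" "D \<subseteq> {..<N}" "card D = s" "v \<in> D" unfolding Sub_def by auto
      have "finite D" using D(2) finite_subset by blast
      then show "x \<in> {E. E \<subseteq> {..<N} - {v} \<and> card E = s - 1}" using D by auto
    qed
  qed
  then have "card {D\<in>Sub N s. v \<in> D} = card {E. E \<subseteq> {..<N} - {v} \<and> card E = s - 1}"
    by (simp add: bij_betw_same_card)
  also have "\<dots> = card ({..<N} - {v}) choose (s - 1)" by (rule n_subsets) simp
  finally show ?thesis using assms by simp
qed

definition phi :: "nat \<Rightarrow> nat set \<Rightarrow> real" where
  "phi v D = (if v \<in> D then real (card D) else 0)"

lemma exp_phi_Sub:
  assumes "v < N" "s \<le> N"
  shows "measure_pmf.expectation (pmf_of_set (Sub N s)) (phi v) = real s ^ 2 / real N"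
proof (cases "s = 0")
  case True
  have "Sub N s = {{}}"
  proof -
    have "x = {}" if "x \<in> Sub N s" for x
      using that True finite_subset[of x "{..<N}"] unfolding Sub_def by auto
    moreover have "{} \<in> Sub N s" using True unfolding Sub_def by auto
    ultimately show ?thesis by blast
  qed
  then show ?thesis using True by (simp add: phi_def pmf_of_set_singleton)
next
  case False
  have "measure_pmf.expectation (pmf_of_set (Sub N s)) (phi v) = (\<Sum>D\<in>Sub N s. phi v D) / card (Sub N s)"
    by (rule integral_pmf_of_set) (use Sub_ne[OF assms(2)] Sub_finite in auto)
  also have "(\<Sum>D\<in>Sub N s. phi v D) = (\<Sum>D\<in>Sub N s. if v \<in> D then real s else 0)"
    by (rule sum.cong) (auto simp: phi_def Sub_def)
  also have "\<dots> = (\<Sum>D\<in>{D\<in>Sub N s. v \<in> D}. real s)"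
    by (rule sum.inter_filter[symmetric]) (rule Sub_finite)
  also have "\<dots> = real s * real ((N - 1) choose (s - 1))"
    using card_Sub_mem[OF assms(1)] False by simp
  also have "card (Sub N s) = N choose s" by (rule Sub_card)
  finally have e: "measure_pmf.expectation (pmf_of_set (Sub N s)) (phi v) =
      real s * real ((N - 1) choose (s - 1)) / real (N choose s)" .
  have id: "real s * real (N choose s) = real N * real ((N - 1) choose (s - 1))"
    using times_binomial_minus1_eq[of s N] False by (metis of_nat_mult gr0I)
  have pos: "real (N choose s) > 0" using assms by simp
  have Npos: "real N > 0" using assms by simp
  show ?thesis unfolding e using id pos Npos
    by (simp add: field_simps power2_eq_square)
qed

lemma exp_phi:
  assumes "set_pmf P \<subseteq> {..N}" "v < N"
  shows "measure_pmf.expectation (attr_set_pmf N P) (phi v) =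
     measure_pmf.expectation P (\<lambda>j. real j ^ 2) / real N"
proof -
  have "measure_pmf.expectation (attr_set_pmf N P) (phi v) =
     (\<Sum>s\<le>N. pmf P s * (real s ^ 2 / real N))"
    by (simp add: exp_attr[OF assms(1)] exp_phi_Sub[OF assms(2)])
  also have "\<dots> = (\<Sum>s\<le>N. pmf P s * real s ^ 2) / real N"
    by (simp add: sum_divide_distrib)
  finally show ?thesis by (simp add: exp_P[OF assms(1)])
qed



lemma set_rig:
  assumes "set_pmf P \<subseteq> {..N}" "D \<in> set_pmf (passive_rig N M P)" "w < M"
  shows "D w \<in> set_pmf (attr_set_pmf N P)" "D w \<subseteq> {..<N}"
proof -
  have "D \<in> PiE_dflt {..<M} {} (set_pmf \<circ> (\<lambda>_. attr_set_pmf N P))"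
    using assms(2) unfolding passive_rig_def by (simp add: set_Pi_pmf)
  then show "D w \<in> set_pmf (attr_set_pmf N P)" using assms(3) by (auto simp: PiE_dflt_def)
  then show "D w \<subseteq> {..<N}" using set_attr[OF assms(1)] by blast
qed

lemma finite_set_rig:
  assumes "set_pmf P \<subseteq> {..N}"
  shows "finite (set_pmf (passive_rig N M P))"
  unfolding passive_rig_def using finite_set_attr[OF assms]
  by (simp add: set_Pi_pmf finite_PiE_dflt)

lemma integ_rig:
  fixes f :: "_ \<Rightarrow> real"
  assumes "set_pmf P \<subseteq> {..N}"
  shows "integrable (measure_pmf (passive_rig N M P)) f"
  by (rule integrable_measure_pmf_finite) (rule finite_set_rig[OF assms])

lemma integ_attr:
  fixes f :: "_ \<Rightarrow> real"
  assumes "set_pmf P \<subseteq> {..N}"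
  shows "integrable (measure_pmf (attr_set_pmf N P)) f"
  by (rule integrable_measure_pmf_finite) (rule finite_set_attr[OF assms])

lemma exp_single:
  fixes f :: "nat set \<Rightarrow> real"
  assumes "w < M"
  shows "measure_pmf.expectation (passive_rig N M P) (\<lambda>D. f (D w)) =
         measure_pmf.expectation (attr_set_pmf N P) f"
proof -
  have "map_pmf (\<lambda>D. D w) (passive_rig N M P) = attr_set_pmf N P"
    unfolding passive_rig_def using assms by (simp add: Pi_pmf_component)
  then show ?thesis by (metis integral_map_pmf)
qed

lemma exp_pair:
  fixes f g :: "nat set \<Rightarrow> real"
  assumes supp: "set_pmf P \<subseteq> {..N}"
    and w: "w1 < M" "w2 < M" "w1 \<noteq> w2" and nn: "\<And>x. f x \<ge> 0" "\<And>x. g x \<ge> 0"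
  shows "measure_pmf.expectation (passive_rig N M P) (\<lambda>D. f (D w1) * g (D w2)) =
         measure_pmf.expectation (attr_set_pmf N P) f * measure_pmf.expectation (attr_set_pmf N P) g"
proof -
  define F where "F = (\<lambda>x. if x = w1 then f else if x = w2 then g else (\<lambda>_::nat set. 1::real))"
  have prod: "(\<Prod>x\<in>{..<M}. F x (D x)) = f (D w1) * g (D w2)" for D
  proof -
    have "(\<Prod>x\<in>{..<M}. F x (D x)) = F w1 (D w1) * (\<Prod>x\<in>{..<M}-{w1}. F x (D x))"
      by (rule prod.remove) (use w in auto)
    also have "(\<Prod>x\<in>{..<M}-{w1}. F x (D x)) = F w2 (D w2) * (\<Prod>x\<in>{..<M}-{w1}-{w2}. F x (D x))"
      by (rule prod.remove) (use w in auto)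
    also have "(\<Prod>x\<in>{..<M}-{w1}-{w2}. F x (D x)) = 1"
      by (rule prod.neutral) (auto simp: F_def)
    finally show ?thesis using w by (simp add: F_def)
  qed
  have Fw1: "F w1 = f" and Fw2: "F w2 = g" using w by (auto simp: F_def)
  have "measure_pmf.expectation (passive_rig N M P) (\<lambda>D. \<Prod>x\<in>{..<M}. F x (D x)) =
        (\<Prod>x\<in>{..<M}. measure_pmf.expectation (attr_set_pmf N P) (\<lambda>v. F x v))"
    unfolding passive_rig_def
    by (rule expectation_prod_Pi_pmf) (auto simp: F_def nn integ_attr[OF supp])
  also have "\<dots> = measure_pmf.expectation (attr_set_pmf N P) (F w1) *
     (\<Prod>x\<in>{..<M}-{w1}. measure_pmf.expectation (attr_set_pmf N P) (\<lambda>v. F x v))"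
    by (rule prod.remove) (use w in auto)
  also have "(\<Prod>x\<in>{..<M}-{w1}. measure_pmf.expectation (attr_set_pmf N P) (\<lambda>v. F x v)) =
     measure_pmf.expectation (attr_set_pmf N P) (F w2) *
     (\<Prod>x\<in>{..<M}-{w1}-{w2}. measure_pmf.expectation (attr_set_pmf N P) (\<lambda>v. F x v))"
    by (rule prod.remove) (use w in auto)
  also have "(\<Prod>x\<in>{..<M}-{w1}-{w2}. measure_pmf.expectation (attr_set_pmf N P) (\<lambda>v. F x v)) = 1"
    by (rule prod.neutral) (auto simp: F_def)
  finally show ?thesis unfolding prod Fw1 Fw2 by simp
qed


lemma Rfun_phi:
  assumes "\<forall>w<M. D w \<subseteq> {..<N}"
  shows "real (Rfun M D) = (\<Sum>w<M. \<Sum>w'\<in>{..<M}-{w}. \<Sum>v<N. phi v (D w) * phi v (D w'))"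
proof -
  have "real (card (D w \<inter> D w') * card (D w) * card (D w')) = (\<Sum>v<N. phi v (D w) * phi v (D w'))"
    if "w < M" "w' < M" for w w'
  proof -
    have "(\<Sum>v<N. phi v (D w) * phi v (D w')) =
          (\<Sum>v\<in>{..<N}. if v \<in> D w \<inter> D w' then real (card (D w)) * real (card (D w')) else 0)"
      by (rule sum.cong) (auto simp: phi_def)
    also have "\<dots> = (\<Sum>v\<in>{v\<in>{..<N}. v \<in> D w \<inter> D w'}. real (card (D w)) * real (card (D w')))"
      by (rule sum.inter_filter[symmetric]) simp
    also have "{v\<in>{..<N}. v \<in> D w \<inter> D w'} = D w \<inter> D w'" using assms that by auto
    finally show ?thesis by simp
  qed
  note h = this
  show ?thesis unfolding Rfun_def of_nat_sum
    by (intro sum.cong refl h) auto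
qed

lemma exp_Rfun:
  assumes supp: "set_pmf P \<subseteq> {..N}"
  defines "B \<equiv> measure_pmf.expectation P (\<lambda>j. real j ^ 2)"
  shows "measure_pmf.expectation (passive_rig N M P) (\<lambda>D. real (Rfun M D)) =
         real M * real (M - 1) * real N * (B / real N) ^ 2"
proof -
  let ?\<Omega> = "passive_rig N M P"
  have "measure_pmf.expectation ?\<Omega> (\<lambda>D. real (Rfun M D)) =
     measure_pmf.expectation ?\<Omega> (\<lambda>D. \<Sum>w<M. \<Sum>w'\<in>{..<M}-{w}. \<Sum>v<N. phi v (D w) * phi v (D w'))"
    by (rule integral_cong_AE) (simp, simp, rule AE_pmfI, rule Rfun_phi, use set_rig(2)[OF supp] in blast)
  also have "\<dots> = (\<Sum>w<M. \<Sum>w'\<in>{..<M}-{w}. \<Sum>v<N.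
      measure_pmf.expectation ?\<Omega> (\<lambda>D. phi v (D w) * phi v (D w')))"
    by (simp add: integ_rig[OF supp] integral_sum)
  also have "\<dots> = (\<Sum>w<M. \<Sum>w'\<in>{..<M}-{w}. \<Sum>v<N. (B / real N) ^ 2)"
  proof (intro sum.cong refl)
    fix w w' v assume "w \<in> {..<M}" "w' \<in> {..<M}-{w}" "v \<in> {..<N}"
    then show "measure_pmf.expectation ?\<Omega> (\<lambda>D. phi v (D w) * phi v (D w')) = (B / real N) ^ 2"
      by (subst exp_pair[OF supp]) (auto simp: phi_def exp_phi[OF supp] B_def power2_eq_square)
  qed
  also have "\<dots> = real M * real (M - 1) * real N * (B / real N) ^ 2"
    by (cases M) (simp_all add: algebra_simps)
  finally show ?thesis .
qed



definition gT :: "real \<Rightarrow> nat \<Rightarrow> real" where "gT T j = min (real (hn j)) T"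

lemma var_bound:
  assumes supp: "set_pmf P \<subseteq> {..N}" and T: "T \<ge> 0"
  defines "a \<equiv> measure_pmf.expectation P (gT T)"
  shows "measure_pmf.expectation (passive_rig N M P)
           (\<lambda>D. ((\<Sum>w<M. gT T (card (D w))) - real M * a) ^ 2) \<le> real M * T ^ 2"
proof -
  let ?\<Omega> = "passive_rig N M P"
  let ?Y = "\<lambda>D. \<Sum>w<M. gT T (card (D w))"
  have g0: "0 \<le> gT T j" for j using T by (simp add: gT_def)
  have gT: "gT T j \<le> T" for j by (simp add: gT_def)
  have ea: "measure_pmf.expectation (attr_set_pmf N P) (\<lambda>A. gT T (card A)) = a"
    unfolding a_def by (rule exp_attr_card[OF supp])
  have q: "measure_pmf.expectation (attr_set_pmf N P) (\<lambda>A. gT T (card A) * gT T (card A)) \<le> T ^ 2"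
  proof -
    have "measure_pmf.expectation (attr_set_pmf N P) (\<lambda>A. gT T (card A) * gT T (card A))
        = measure_pmf.expectation P (\<lambda>j. gT T j * gT T j)"
      by (rule exp_attr_card[OF supp])
    also have "\<dots> = (\<Sum>s\<le>N. pmf P s * (gT T s * gT T s))" by (rule exp_P[OF supp])
    also have "\<dots> \<le> (\<Sum>s\<le>N. pmf P s * T ^ 2)"
      by (intro sum_mono mult_left_mono) (auto simp: power2_eq_square intro: mult_mono[OF gT gT T g0])
    also have "\<dots> = T ^ 2 * (\<Sum>s\<le>N. pmf P s)" by (simp add: sum_distrib_right mult.commute)
    also have "(\<Sum>s\<le>N. pmf P s) = 1" by (rule sum_pmf_eq_1) (use supp in auto)
    finally show ?thesis by simp
  qed
  have EY: "measure_pmf.expectation ?\<Omega> ?Y = real M * a"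
  proof -
    have "measure_pmf.expectation ?\<Omega> ?Y = (\<Sum>w<M. measure_pmf.expectation ?\<Omega> (\<lambda>D. gT T (card (D w))))"
      by (simp add: integ_rig[OF supp] integral_sum)
    also have "\<dots> = (\<Sum>w<M. a)"
    proof (rule sum.cong)
      fix w assume "w \<in> {..<M}"
      then show "measure_pmf.expectation ?\<Omega> (\<lambda>D. gT T (card (D w))) = a"
        using exp_single[where w=w and M=M and f="\<lambda>A. gT T (card A)" and N=N and P=P] ea by simp
    qed simp
    finally show ?thesis by simp
  qed
  have Ysq: "?Y D ^ 2 = (\<Sum>w<M. gT T (card (D w)) * gT T (card (D w)) +
      (\<Sum>w'\<in>{..<M}-{w}. gT T (card (D w)) * gT T (card (D w'))))" for D
  proof -
    have "?Y D ^ 2 = (\<Sum>w<M. \<Sum>w'<M. gT T (card (D w)) * gT T (card (D w')))"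
      by (simp add: power2_eq_square sum_product)
    also have "\<dots> = (\<Sum>w<M. gT T (card (D w)) * gT T (card (D w)) +
      (\<Sum>w'\<in>{..<M}-{w}. gT T (card (D w)) * gT T (card (D w'))))"
      by (intro sum.cong refl) (simp add: sum.remove)
    finally show ?thesis .
  qed
  have EY2: "measure_pmf.expectation ?\<Omega> (\<lambda>D. ?Y D ^ 2) \<le> real M * T ^ 2 + real M * real (M - 1) * a ^ 2"
  proof -
    have "measure_pmf.expectation ?\<Omega> (\<lambda>D. ?Y D ^ 2) =
      (\<Sum>w<M. measure_pmf.expectation ?\<Omega> (\<lambda>D. gT T (card (D w)) * gT T (card (D w))) +
      (\<Sum>w'\<in>{..<M}-{w}. measure_pmf.expectation ?\<Omega> (\<lambda>D. gT T (card (D w)) * gT T (card (D w')))))"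
      unfolding Ysq by (simp add: integ_rig[OF supp] integral_sum)
    also have "\<dots> = (\<Sum>w<M. measure_pmf.expectation (attr_set_pmf N P) (\<lambda>A. gT T (card A) * gT T (card A)) +
      (\<Sum>w'\<in>{..<M}-{w}. a * a))"
    proof (intro sum.cong refl arg_cong2[where f="(+)"])
      fix w assume "w \<in> {..<M}"
      then show "measure_pmf.expectation ?\<Omega> (\<lambda>D. gT T (card (D w)) * gT T (card (D w))) =
         measure_pmf.expectation (attr_set_pmf N P) (\<lambda>A. gT T (card A) * gT T (card A))"
        by (intro exp_single) simp
    next
      fix w w' assume "w \<in> {..<M}" "w' \<in> {..<M}-{w}"
      then show "measure_pmf.expectation ?\<Omega> (\<lambda>D. gT T (card (D w)) * gT T (card (D w'))) = a * a"
        by (subst exp_pair[OF supp]) (auto simp: g0 ea)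
    qed
    also have "\<dots> \<le> (\<Sum>w<M. T ^ 2 + (\<Sum>w'\<in>{..<M}-{w}. a * a))"
      by (intro sum_mono add_right_mono q)
    also have "\<dots> = real M * T ^ 2 + real M * real (M - 1) * a ^ 2"
      by (cases M) (simp_all add: sum.distrib power2_eq_square algebra_simps)
    finally show ?thesis .
  qed
  have "measure_pmf.expectation ?\<Omega> (\<lambda>D. (?Y D - real M * a) ^ 2) =
     measure_pmf.expectation ?\<Omega> (\<lambda>D. ?Y D ^ 2) - 2 * (real M * a) * measure_pmf.expectation ?\<Omega> ?Y
       + (real M * a) ^ 2"
  proof -
    have eq: "(\<lambda>D. (?Y D - real M * a) ^ 2) = (\<lambda>D. ?Y D ^ 2 - 2 * (real M * a) * ?Y D + (real M * a) ^ 2)"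
      by (rule ext) (simp add: power2_diff algebra_simps)
    show ?thesis by (subst eq) (simp add: integ_rig[OF supp] del: integral_sum')
  qed
  also have "\<dots> \<le> real M * T ^ 2 + real M * real (M - 1) * a ^ 2 - 2 * (real M * a) * (real M * a)
       + (real M * a) ^ 2" using EY2 EY by simp
  also have "\<dots> \<le> real M * T ^ 2"
  proof (cases "M = 0")
    case False
    then have "real (M - 1) = real M - 1" by simp
    moreover have "0 \<le> a * (a * real M)" by (metis mult.assoc mult_nonneg_nonneg of_nat_0_le_iff zero_le_square)
    ultimately show ?thesis by (simp add: power2_eq_square algebra_simps)
  qed simp
  finally show ?thesis .
qed



definition f3 :: "real \<Rightarrow> real" where "f3 x = x * (x - 1) * (x - 2) / 2"
definition gR :: "real \<Rightarrow> real \<Rightarrow> real" where "gR T x = min (max (f3 x) 0) T"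

lemma real_choose2: "real (n choose 2) = real n * (real n - 1) / 2"
proof (induction n)
  case 0 then show ?case by simp
next
  case (Suc n)
  have "Suc n choose 2 = (n choose 1) + (n choose 2)"
    using binomial_Suc_Suc[of n 1] by (simp add: numeral_2_eq_2)
  then have "real (Suc n choose 2) = real n + real (n choose 2)" by simp
  then show ?case using Suc by (simp add: field_simps)
qed

lemma hn_f3: "real (hn j) = f3 (real j)"
proof (cases "j = 0")
  case True then show ?thesis by (simp add: hn_def f3_def)
next
  case False
  then have "real (j - 1) = real j - 1" by simp
  then show ?thesis unfolding hn_def f3_def of_nat_mult real_choose2 by (simp add: field_simps)
qed

lemma gT_gR: "T \<ge> 0 \<Longrightarrow> gT T j = gR T (real j)"
  unfolding gT_def gR_def hn_f3[symmetric] by simp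

lemma cont_gR: "isCont (gR T) x"
  unfolding gR_def f3_def by (intro continuous_intros) auto

lemma bound_gR: "T \<ge> 0 \<Longrightarrow> norm (gR T x) \<le> T"
  unfolding gR_def by auto

lemma cube_le: "x ^ 3 \<le> 2 * max (f3 x) 0 + 3 * x ^ 2"
proof (cases "x \<ge> 0")
  case True
  have "x ^ 3 = 2 * f3 x + 3 * x ^ 2 - 2 * x" unfolding f3_def by (simp add: field_simps power3_eq_cube power2_eq_square)
  then show ?thesis using True by simp
next
  case False
  then have "x ^ 3 < 0" by (simp add: power_less_zero_eq)
  then show ?thesis by (smt (verit) zero_le_power2)
qed

lemma enn_lin: "(a::real) \<ge> 0 \<Longrightarrow> b \<ge> 0 \<Longrightarrow> ennreal (2*a + 3*b) = 2 * ennreal a + 3 * ennreal b"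
proof -
  assume h: "a \<ge> 0" "b \<ge> 0"
  have e1: "ennreal (2*a) = 2 * ennreal a" by (metis ennreal_mult ennreal_numeral h(1) zero_le_numeral)
  have e2: "ennreal (3*b) = 3 * ennreal b" by (metis ennreal_mult ennreal_numeral h(2) zero_le_numeral)
  have "ennreal (2*a + 3*b) = ennreal (2*a) + ennreal (3*b)" by (rule ennreal_plus) (use h in auto)
  then show ?thesis by (simp only: e1 e2)
qed

lemma Z_part:
  assumes Z: "real_distribution Z" and Z_sq: "integrable Z (\<lambda>x. x ^ 2)"
    and Z_cube: "(\<integral>\<^sup>+ x. ennreal (x ^ 3) \<partial>Z) = \<infinity>"
  shows "\<exists>T::nat. (\<integral>x. gR (real T) x \<partial>Z) > K"
proof -
  interpret Z: real_distribution Z by fact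
  have meas_f3[measurable]: "f3 \<in> borel_measurable Z"
    unfolding f3_def by (simp add: measurable_cong_sets[OF Z.events_eq_borel refl])
  have meas_gR[measurable]: "gR t \<in> borel_measurable Z" for t
    unfolding gR_def by measurable
  have "(\<integral>\<^sup>+ x. ennreal (x ^ 3) \<partial>Z) \<le> (\<integral>\<^sup>+ x. ennreal (2 * max (f3 x) 0 + 3 * x ^ 2) \<partial>Z)"
    by (intro nn_integral_mono ennreal_leI cube_le)
  also have "\<dots> = (\<integral>\<^sup>+ x. 2 * ennreal (max (f3 x) 0) + 3 * ennreal (x ^ 2) \<partial>Z)"
    by (intro nn_integral_cong enn_lin) auto
  also have "\<dots> = (\<integral>\<^sup>+ x. 2 * ennreal (max (f3 x) 0) \<partial>Z) + (\<integral>\<^sup>+ x. 3 * ennreal (x ^ 2) \<partial>Z)"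
    by (rule nn_integral_add) auto
  also have "(\<integral>\<^sup>+ x. 2 * ennreal (max (f3 x) 0) \<partial>Z) = 2 * (\<integral>\<^sup>+ x. ennreal (max (f3 x) 0) \<partial>Z)"
    by (rule nn_integral_cmult) auto
  also have "(\<integral>\<^sup>+ x. 3 * ennreal (x ^ 2) \<partial>Z) = 3 * (\<integral>\<^sup>+ x. ennreal (x ^ 2) \<partial>Z)"
    by (rule nn_integral_cmult) (auto simp: measurable_cong_sets[OF Z.events_eq_borel refl])
  finally have inf: "2 * (\<integral>\<^sup>+ x. ennreal (max (f3 x) 0) \<partial>Z) + 3 * (\<integral>\<^sup>+ x. ennreal (x ^ 2) \<partial>Z) = \<infinity>"
    using Z_cube by (simp add: top_unique)
  have "(\<integral>\<^sup>+ x. ennreal (x ^ 2) \<partial>Z) = ennreal (\<integral>x. x ^ 2 \<partial>Z)"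
    by (rule nn_integral_eq_integral) (use Z_sq in auto)
  then have "(\<integral>\<^sup>+ x. ennreal (x ^ 2) \<partial>Z) < \<infinity>" by simp
  then have inf2: "(\<integral>\<^sup>+ x. ennreal (max (f3 x) 0) \<partial>Z) = \<infinity>"
    using inf by (auto simp: ennreal_mult_eq_top_iff ennreal_add_eq_top top.not_eq_extremum)
  have sup: "(SUP T. ennreal (gR (real T) x)) = ennreal (max (f3 x) 0)" for x
  proof (rule antisym)
    show "(SUP T. ennreal (gR (real T) x)) \<le> ennreal (max (f3 x) 0)"
      by (intro SUP_least ennreal_leI) (simp add: gR_def)
    have "ennreal (max (f3 x) 0) = ennreal (gR (real (nat \<lceil>max (f3 x) 0\<rceil>)) x)"
      unfolding gR_def by (simp add: min_def)
    also have "\<dots> \<le> (SUP T. ennreal (gR (real T) x))" by (rule SUP_upper) simp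
    finally show "ennreal (max (f3 x) 0) \<le> (SUP T. ennreal (gR (real T) x))" .
  qed
  have "(SUP T. (\<integral>\<^sup>+ x. ennreal (gR (real T) x) \<partial>Z)) = (\<integral>\<^sup>+ x. (SUP T. ennreal (gR (real T) x)) \<partial>Z)"
  proof (rule nn_integral_monotone_convergence_SUP[symmetric])
    show "incseq (\<lambda>T x. ennreal (gR (real T) x))"
      by (intro monoI le_funI ennreal_leI) (auto simp: gR_def)
  qed (simp add: gR_def)
  also have "\<dots> = \<infinity>" using inf2 by (simp add: sup)
  finally have supinf: "(SUP T. (\<integral>\<^sup>+ x. ennreal (gR (real T) x) \<partial>Z)) = \<infinity>" .
  have "ennreal (max K 0) < (SUP T. (\<integral>\<^sup>+ x. ennreal (gR (real T) x) \<partial>Z))"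
    unfolding supinf by simp
  then obtain T :: nat where T: "ennreal (max K 0) < (\<integral>\<^sup>+ x. ennreal (gR (real T) x) \<partial>Z)"
    by (auto simp: less_SUP_iff)
  have "(\<integral>\<^sup>+ x. ennreal (gR (real T) x) \<partial>Z) = ennreal (\<integral>x. gR (real T) x \<partial>Z)"
  proof (rule nn_integral_eq_integral)
    show "integrable Z (gR (real T))"
      by (rule Z.integrable_const_bound[where B="real T"]) (auto simp: gR_def[symmetric] meas_gR, auto simp: gR_def)
  qed (auto simp: gR_def)
  then have "max K 0 < (\<integral>x. gR (real T) x \<partial>Z)" using T
    by (metis ennreal_less_iff max.cobounded2)
  then show ?thesis by auto
qed

lemma weak_part:
  fixes P :: "nat \<Rightarrow> nat pmf" and f :: "real \<Rightarrow> real"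
  assumes Z: "real_distribution Z"
    and conv: "weak_conv_m (\<lambda>k. distr (measure_pmf (P k)) borel real) Z"
    and cont: "\<And>x. isCont f x" and bdd: "\<And>x. norm (f x) \<le> B"
  shows "(\<lambda>k. measure_pmf.expectation (P k) (\<lambda>j. f (real j))) \<longlonglongrightarrow> (\<integral>x. f x \<partial>Z)"
proof -
  have rd: "real_distribution (distr (measure_pmf (P k)) borel real)" for k
  proof -
    have "prob_space (distr (measure_pmf (P k)) borel real)" by (rule measure_pmf.prob_space_distr) simp
    then show ?thesis unfolding real_distribution_def real_distribution_axioms_def by simp
  qed
  have fm: "f \<in> borel_measurable borel"
    using cont by (intro borel_measurable_continuous_onI continuous_at_imp_continuous_on) auto
  have "(\<lambda>k. integral\<^sup>L (distr (measure_pmf (P k)) borel real) f) \<longlonglongrightarrow> integral\<^sup>L Z f"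
    by (rule weak_conv_imp_integral_bdd_continuous_conv[where \<mu>="\<lambda>k. distr (measure_pmf (P k)) borel real"])
       (use rd Z conv cont bdd in auto)
  moreover have "integral\<^sup>L (distr (measure_pmf (P k)) borel real) f = measure_pmf.expectation (P k) (\<lambda>j. f (real j))" for k
    by (rule integral_distr) (simp_all add: fm)
  ultimately show ?thesis by simp
qed



lemma good:
  assumes sub: "\<forall>w<M. D w \<subseteq> {..<N}"
    and S: "real (Sfun M D) > x" and x: "x > 0" and R: "real (Rfun M D) < \<delta> * x"
    and d: "0 < \<delta>" "\<delta> \<le> 1/2"
  shows "\<bar>global_clustering N (rig_adj M D) - 1\<bar> < 2 * \<delta>"
proof -
  define t where "t = real (3 * num_triangles N (rig_adj M D))"
  define l where "l = real (num_2paths N (rig_adj M D))"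
  define s where "s = real (Sfun M D)"
  define r where "r = real (Rfun M D)"
  have h1: "t \<le> l" unfolding t_def l_def using det_bounds(1)[OF sub] by linarith
  have h2: "s \<le> t + r" unfolding t_def s_def r_def using det_bounds(2)[OF sub]
    by (metis of_nat_add of_nat_le_iff)
  have h3: "l \<le> t + r" unfolding t_def l_def r_def using det_bounds(3)[OF sub]
    by (metis of_nat_add of_nat_le_iff)
  have sx: "s > x" "r < \<delta> * x" using S R unfolding s_def r_def by auto
  have r0: "r \<ge> 0" unfolding r_def by simp
  have "r < \<delta> * s" using sx d x by (smt (verit) mult_left_mono)
  have ds: "\<delta> * s \<le> s / 2" using d sx x by (simp add: mult_right_mono)
  have tpos: "t > s / 2" using h2 \<open>r < \<delta> * s\<close> ds by linarith
  have spos: "s > 0" using sx x by linarith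
  have lpos: "l > 0" using h1 tpos spos by linarith
  have gc: "global_clustering N (rig_adj M D) = t / l"
    unfolding global_clustering_def t_def l_def by simp
  have "l - t < 2 * \<delta> * l"
  proof -
    have "l - t \<le> r" using h3 by linarith
    also have "r < \<delta> * s" by fact
    also have "\<delta> * s = 2 * \<delta> * (s / 2)" by simp
    also have "\<dots> < 2 * \<delta> * l" using tpos h1 d by (intro mult_strict_left_mono) auto
    finally show ?thesis .
  qed
  then have "(l - t) / l < 2 * \<delta>" using lpos by (simp add: divide_less_eq)
  moreover have "t / l \<le> 1" using h1 lpos by simp
  ultimately show ?thesis unfolding gc using lpos d by (simp add: diff_divide_distrib abs_if)
qed

lemma Markov_pmf:
  fixes u :: "'a \<Rightarrow> real"
  assumes "finite (set_pmf p)" "\<And>x. u x \<ge> 0" "c > 0"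
  shows "measure_pmf.prob p {x. u x \<ge> c} \<le> measure_pmf.expectation p u / c"
  using integral_Markov_inequality_measure[of "measure_pmf p" u UNIV c] assms
  by (auto intro: integrable_measure_pmf_finite)

lemma finite_k:
  assumes supp: "set_pmf P \<subseteq> {..N}" and Npos: "N > 0"
    and d: "0 < \<delta>" "\<delta> \<le> 1/2" and L: "L > 0" and T: "T \<ge> 0"
    and big: "real M * measure_pmf.expectation P (gT T) \<ge> 2 * L * real N"
  shows "measure_pmf.prob (passive_rig N M P)
            {D. \<bar>global_clustering N (rig_adj M D) - 1\<bar> > 2 * \<delta>}
         \<le> real M ^ 2 * (measure_pmf.expectation P (\<lambda>j. real j ^ 2)) ^ 2 / real N / (\<delta> * L * real N)
           + real M * T ^ 2 / (L * real N) ^ 2"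
proof -
  let ?\<Omega> = "passive_rig N M P"
  let ?a = "measure_pmf.expectation P (gT T)"
  let ?B = "measure_pmf.expectation P (\<lambda>j. real j ^ 2)"
  let ?Y = "\<lambda>D. \<Sum>w<M. gT T (card (D w))"
  define E1 where "E1 = {D :: nat \<Rightarrow> nat set. real (Rfun M D) \<ge> \<delta> * L * real N}"
  define E2 where "E2 = {D :: nat \<Rightarrow> nat set. (?Y D - real M * ?a) ^ 2 \<ge> (L * real N) ^ 2}"
  have fin: "finite (set_pmf ?\<Omega>)" by (rule finite_set_rig[OF supp])
  have LN: "L * real N > 0" using L Npos by simp
  have incl: "{D. \<bar>global_clustering N (rig_adj M D) - 1\<bar> > 2 * \<delta>} \<inter> set_pmf ?\<Omega> \<subseteq> E1 \<union> E2"
  proof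
    fix D assume D: "D \<in> {D. \<bar>global_clustering N (rig_adj M D) - 1\<bar> > 2 * \<delta>} \<inter> set_pmf ?\<Omega>"
    have sub: "\<forall>w<M. D w \<subseteq> {..<N}" using D set_rig(2)[OF supp] by blast
    show "D \<in> E1 \<union> E2"
    proof (rule ccontr)
      assume "D \<notin> E1 \<union> E2"
      then have n1: "real (Rfun M D) < \<delta> * (L * real N)" and n2: "(?Y D - real M * ?a) ^ 2 < (L * real N) ^ 2"
        unfolding E1_def E2_def by (auto simp: mult.assoc)
      have "\<bar>?Y D - real M * ?a\<bar> < L * real N" using power2_less_imp_less[of "\<bar>?Y D - real M * ?a\<bar>" "L * real N"] n2 LN by simp
      then have Ybig: "?Y D > L * real N" using big by linarith
      have "?Y D \<le> real (Sfun M D)"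
        unfolding Sfun_def of_nat_sum by (intro sum_mono) (simp add: gT_def)
      then have "real (Sfun M D) > L * real N" using Ybig by linarith
      from good[OF sub this LN n1 d] have "\<bar>global_clustering N (rig_adj M D) - 1\<bar> < 2 * \<delta>" .
      then show False using D by auto
    qed
  qed
  have "measure_pmf.prob ?\<Omega> {D. \<bar>global_clustering N (rig_adj M D) - 1\<bar> > 2 * \<delta>}
      = measure_pmf.prob ?\<Omega> ({D. \<bar>global_clustering N (rig_adj M D) - 1\<bar> > 2 * \<delta>} \<inter> set_pmf ?\<Omega>)"
    by (rule measure_Int_set_pmf[symmetric])
  also have "\<dots> \<le> measure_pmf.prob ?\<Omega> (E1 \<union> E2)"
    by (rule measure_pmf.finite_measure_mono[OF incl]) simp
  also have "\<dots> \<le> measure_pmf.prob ?\<Omega> E1 + measure_pmf.prob ?\<Omega> E2"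
    by (rule measure_Un_le) simp_all
  also have "measure_pmf.prob ?\<Omega> E1 \<le> real M ^ 2 * ?B ^ 2 / real N / (\<delta> * L * real N)"
  proof -
    have m: "measure_pmf.prob ?\<Omega> E1 \<le> measure_pmf.expectation ?\<Omega> (\<lambda>D. real (Rfun M D)) / (\<delta> * L * real N)"
      unfolding E1_def by (rule Markov_pmf[OF fin]) (use d LN in \<open>auto simp: mult.assoc\<close>)
    have eq: "measure_pmf.expectation ?\<Omega> (\<lambda>D. real (Rfun M D)) = real M * real (M - 1) * real N * (?B / real N) ^ 2"
      by (rule exp_Rfun[OF supp])
    have le: "real M * real (M - 1) * real N * (?B / real N) ^ 2 \<le> real M ^ 2 * ?B ^ 2 / real N"
    proof -
      have "real (M - 1) \<le> real M" by simp
      then have mm: "real M * real (M - 1) \<le> real M ^ 2" by (simp add: power2_eq_square mult_left_mono)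
      have e: "real M * real (M - 1) * real N * (?B / real N) ^ 2 = (real M * real (M - 1)) * (?B ^ 2 / real N)"
        using Npos by (simp add: power2_eq_square)
      have "(real M * real (M - 1)) * (?B ^ 2 / real N) \<le> real M ^ 2 * (?B ^ 2 / real N)"
        by (rule mult_right_mono[OF mm]) simp
      then show ?thesis unfolding e by simp
    qed
    have "measure_pmf.expectation ?\<Omega> (\<lambda>D. real (Rfun M D)) / (\<delta> * L * real N)
        \<le> (real M ^ 2 * ?B ^ 2 / real N) / (\<delta> * L * real N)"
      by (rule divide_right_mono) (use eq le d LN in \<open>auto simp: mult.assoc\<close>)
    then show ?thesis using m by linarith
  qed
  also have "measure_pmf.prob ?\<Omega> E2 \<le> real M * T ^ 2 / (L * real N) ^ 2"
  proof -
    have "measure_pmf.prob ?\<Omega> E2 \<le> measure_pmf.expectation ?\<Omega> (\<lambda>D. (?Y D - real M * ?a) ^ 2) / (L * real N) ^ 2"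
      unfolding E2_def by (rule Markov_pmf[OF fin]) (use LN Npos in auto)
    also have "\<dots> \<le> real M * T ^ 2 / (L * real N) ^ 2"
      by (intro divide_right_mono var_bound[OF supp T]) simp
    finally show ?thesis .
  qed
  finally show ?thesis by simp
qed



theorem theorem2:
  fixes \<beta> :: real
    and n m :: "nat \<Rightarrow> nat"
    and Pstar :: "nat \<Rightarrow> nat pmf"
    and Z :: "real measure"
  assumes beta_pos: "\<beta> > 0"
    and n_lim: "filterlim n at_top sequentially"
    and m_lim: "filterlim m at_top sequentially"
    and ratio: "(\<lambda>k. real (m k) / real (n k)) \<longlonglongrightarrow> \<beta>"
    and support: "\<And>k. set_pmf (Pstar k) \<subseteq> {..n k}"
    and Z_distr: "real_distribution Z"
    and conv_distr: "weak_conv_m (\<lambda>k. distr (measure_pmf (Pstar k)) borel real) Z"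
    and Z_sq: "integrable Z (\<lambda>x. x ^ 2)"
    and second_moment:
      "(\<lambda>k. measure_pmf.expectation (Pstar k) (\<lambda>j. real j ^ 2))
         \<longlonglongrightarrow> (\<integral>x. x ^ 2 \<partial>Z)"
    and Z_cube: "(\<integral>\<^sup>+ x. ennreal (x ^ 3) \<partial>Z) = \<infinity>"
  shows "\<forall>\<epsilon>>0. (\<lambda>k. measure_pmf.prob (passive_rig (n k) (m k) (Pstar k))
            {D. \<bar>global_clustering (n k) (rig_adj (m k) D) - 1\<bar> > \<epsilon>}) \<longlonglongrightarrow> 0"
proof (intro allI impI)
  fix \<epsilon> :: real assume eps: "\<epsilon> > 0"
  define \<delta> where "\<delta> = min (\<epsilon>/2) (1/2)"
  have d: "0 < \<delta>" "\<delta> \<le> 1/2" "2 * \<delta> \<le> \<epsilon>" using eps unfolding \<delta>_def by auto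
  define p where "p k = measure_pmf.prob (passive_rig (n k) (m k) (Pstar k))
            {D. \<bar>global_clustering (n k) (rig_adj (m k) D) - 1\<bar> > \<epsilon>}" for k
  define B where "B k = measure_pmf.expectation (Pstar k) (\<lambda>j. real j ^ 2)" for k
  have "Bseq B" unfolding B_def using second_moment by (intro convergent_imp_Bseq convergentI)
  then obtain Bm where Bm: "Bm > 0" "\<And>k. norm (B k) \<le> Bm" by (auto simp: Bseq_def)
  have Ninf: "filterlim (\<lambda>k. real (n k)) at_top sequentially"
    by (rule filterlim_compose[OF filterlim_real_sequentially n_lim])
  have npos: "eventually (\<lambda>k. n k > 0) sequentially"
    using n_lim unfolding filterlim_at_top by (metis (mono_tags) eventually_mono Suc_le_eq)
  have "(\<lambda>k. p k) \<longlonglongrightarrow> 0"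
  proof (rule order_tendstoI)
    fix a :: real assume "a < 0"
    then show "eventually (\<lambda>k. a < p k) sequentially"
      unfolding p_def by (intro always_eventually allI) (auto intro: less_le_trans[OF _ measure_nonneg])
  next
    fix \<eta> :: real assume eta: "\<eta> > 0"
    define L where "L = 4 * (\<beta> + 1) ^ 2 * Bm ^ 2 / (\<delta> * \<eta>) + 1"
    have "0 \<le> 4 * (\<beta> + 1) ^ 2 * Bm ^ 2 / (\<delta> * \<eta>)" using d eta by simp
    then have L0: "L > 0" unfolding L_def by linarith
    have Lbig: "L > 2 * (\<beta> + 1) ^ 2 * Bm ^ 2 / (\<delta> * \<eta>)"
    proof -
      have "2 * (\<beta> + 1) ^ 2 * Bm ^ 2 / (\<delta> * \<eta>) \<le> 4 * (\<beta> + 1) ^ 2 * Bm ^ 2 / (\<delta> * \<eta>)"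
        using d eta by (intro divide_right_mono mult_right_mono) auto
      then show ?thesis unfolding L_def by linarith
    qed
    obtain T :: nat where T: "(\<integral>x. gR (real T) x \<partial>Z) > 4 * L / \<beta>"
      using Z_part[OF Z_distr Z_sq Z_cube] by blast
    define a where "a k = measure_pmf.expectation (Pstar k) (gT (real T))" for k
    have a_eq: "a k = measure_pmf.expectation (Pstar k) (\<lambda>j. gR (real T) (real j))" for k
    proof -
      have "gT (real T) = (\<lambda>j. gR (real T) (real j))" by (rule ext) (simp add: gT_gR)
      then show ?thesis unfolding a_def by simp
    qed
    have a_conv: "a \<longlonglongrightarrow> (\<integral>x. gR (real T) x \<partial>Z)"
      unfolding a_eq by (rule weak_part[OF Z_distr conv_distr cont_gR bound_gR]) simp
    have "(\<lambda>k. real (m k) / real (n k) * a k) \<longlonglongrightarrow> \<beta> * (\<integral>x. gR (real T) x \<partial>Z)"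
      by (intro tendsto_mult ratio a_conv)
    moreover have "\<beta> * (\<integral>x. gR (real T) x \<partial>Z) > 2 * L"
    proof -
      have "\<beta> * (\<integral>x. gR (real T) x \<partial>Z) > \<beta> * (4 * L / \<beta>)"
        using T beta_pos by (intro mult_strict_left_mono) auto
      then show ?thesis using beta_pos L0 by simp
    qed
    ultimately have ev1: "eventually (\<lambda>k. real (m k) / real (n k) * a k > 2 * L) sequentially"
      by (rule order_tendstoD)
    have ev2: "eventually (\<lambda>k. real (m k) / real (n k) < \<beta> + 1) sequentially"
      using ratio by (rule order_tendstoD) simp
    have "(\<lambda>k. real (m k) / real (n k) * (real T ^ 2 / L ^ 2) / real (n k)) \<longlonglongrightarrow> 0"
      by (rule tendsto_divide_0[OF tendsto_mult[OF ratio tendsto_const] filterlim_at_top_imp_at_infinity[OF Ninf]])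
    then have ev3: "eventually (\<lambda>k. real (m k) / real (n k) * (real T ^ 2 / L ^ 2) / real (n k) < \<eta> / 2) sequentially"
      by (rule order_tendstoD) (use eta in simp)
    show "eventually (\<lambda>k. p k < \<eta>) sequentially"
      using npos ev1 ev2 ev3
    proof eventually_elim
      case (elim k)
      let ?N = "n k" and ?M = "m k" and ?P = "Pstar k"
      have Npos: "real ?N > 0" using elim by simp
      have big: "real ?M * measure_pmf.expectation ?P (gT (real T)) \<ge> 2 * L * real ?N"
      proof -
        have "2 * L < real ?M / real ?N * a k" using elim by simp
        then have "2 * L * real ?N < real ?M * a k" using Npos by (simp add: field_simps)
        then show ?thesis unfolding a_def by simp
      qed
      have fk: "measure_pmf.prob (passive_rig ?N ?M ?P)
            {D. \<bar>global_clustering ?N (rig_adj ?M D) - 1\<bar> > 2 * \<delta>}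
         \<le> real ?M ^ 2 * (B k) ^ 2 / real ?N / (\<delta> * L * real ?N)
           + real ?M * (real T) ^ 2 / (L * real ?N) ^ 2"
        unfolding B_def by (rule finite_k[OF support elim(1) d(1,2) L0]) (use big in simp_all)
      have sub: "p k \<le> measure_pmf.prob (passive_rig ?N ?M ?P)
            {D. \<bar>global_clustering ?N (rig_adj ?M D) - 1\<bar> > 2 * \<delta>}"
        unfolding p_def by (rule measure_pmf.finite_measure_mono) (use d in auto)
      have t1: "real ?M ^ 2 * (B k) ^ 2 / real ?N / (\<delta> * L * real ?N) < \<eta> / 2"
      proof -
        have q: "real ?M / real ?N \<ge> 0" by simp
        have "real ?M ^ 2 * (B k) ^ 2 / real ?N / (\<delta> * L * real ?N)
            = (real ?M / real ?N) ^ 2 * (B k) ^ 2 / (\<delta> * L)"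
          using Npos by (simp add: field_simps power2_eq_square)
        also have "\<dots> \<le> (\<beta> + 1) ^ 2 * Bm ^ 2 / (\<delta> * L)"
        proof -
          have b1: "(real ?M / real ?N) ^ 2 \<le> (\<beta> + 1) ^ 2" by (rule power_mono) (use elim in simp_all)
          have b2: "B k ^ 2 \<le> Bm ^ 2" using power_mono[OF Bm(2)[of k] norm_ge_zero, of 2] by simp
          have "(real ?M / real ?N) ^ 2 * B k ^ 2 \<le> (\<beta> + 1) ^ 2 * Bm ^ 2"
            by (rule mult_mono[OF b1 b2]) simp_all
          then show ?thesis by (rule divide_right_mono) (use d L0 in simp)
        qed
        also have "\<dots> < \<eta> / 2"
        proof -
          have "(\<beta> + 1) ^ 2 * Bm ^ 2 < \<eta> / 2 * (\<delta> * L)"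
            using Lbig d eta by (simp add: field_simps)
          then show ?thesis using d L0 by (simp add: divide_less_eq)
        qed
        finally show ?thesis .
      qed
      have t2: "real ?M * (real T) ^ 2 / (L * real ?N) ^ 2 < \<eta> / 2"
      proof -
        have "real ?M * (real T) ^ 2 / (L * real ?N) ^ 2 =
            real (m k) / real (n k) * (real T ^ 2 / L ^ 2) / real (n k)"
          using Npos L0 by (simp add: field_simps power2_eq_square)
        then show ?thesis using elim(4) by linarith
      qed
      show "p k < \<eta>" using sub fk t1 t2 by linarith
    qed
  qed
  then show "(\<lambda>k. measure_pmf.prob (passive_rig (n k) (m k) (Pstar k))
            {D. \<bar>global_clustering (n k) (rig_adj (m k) D) - 1\<bar> > \<epsilon>}) \<longlonglongrightarrow> 0"
    unfolding p_def .
qed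


end
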